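(* Let $G$ be an infinite compact group and $\alpha$ an automorphism of $G$ such that $(G,\alpha)$ has finite depth. Let $V$ be an open subgroup of $G$ with $\bigcap_{k\in\mathbb{Z}}\alpha^k(V)=\{1\}$ and $V=V_+V_-$. Then the index $[\alpha(V_+):V_+]$ is strictly greater than $1$ and does not depend on the choice of the open subgroup $V$ with these two properties.
   Context: $V_+=\bigcap_{k\ge0}\alpha^k(V)$ and $V_-=\bigcap_{k\ge0}\alpha^{-k}(V)$. $(G,\alpha)$ has finite depth if there is an open subgroup $V\le G$ with $\bigcap_{k\in\mathbb{Z}}\alpha^k(V)=\{1\}$. *)

theory Defs
  imports "HOL-Analysis.Analysis" "HOL-Algebra.Algebra"
begin

definition topological_group :: "('a, 'b) monoid_scheme \<Rightarrow> 'a topology \<Rightarrow> bool" where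
  "topological_group G T \<longleftrightarrow> group G \<and> topspace T = carrier G
     \<and> continuous_map (prod_topology T T) T (\<lambda>(x, y). x \<otimes>\<^bsub>G\<^esub> y)
     \<and> continuous_map T T (\<lambda>x. inv\<^bsub>G\<^esub> x)"

definition aut_pow :: "('a, 'b) monoid_scheme \<Rightarrow> ('a \<Rightarrow> 'a) \<Rightarrow> int \<Rightarrow> 'a \<Rightarrow> 'a" where
  "aut_pow G \<alpha> k = (if 0 \<le> k then \<alpha> ^^ nat k else (inv_into (carrier G) \<alpha>) ^^ nat (- k))"

definition V_plus :: "('a, 'b) monoid_scheme \<Rightarrow> ('a \<Rightarrow> 'a) \<Rightarrow> 'a set \<Rightarrow> 'a set" where
  "V_plus G \<alpha> V = (\<Inter>k::nat. aut_pow G \<alpha> (int k) ` V)"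

definition V_minus :: "('a, 'b) monoid_scheme \<Rightarrow> ('a \<Rightarrow> 'a) \<Rightarrow> 'a set \<Rightarrow> 'a set" where
  "V_minus G \<alpha> V = (\<Inter>k::nat. aut_pow G \<alpha> (- int k) ` V)"

definition depth_subgroup :: "('a, 'b) monoid_scheme \<Rightarrow> 'a topology \<Rightarrow> ('a \<Rightarrow> 'a) \<Rightarrow> 'a set \<Rightarrow> bool" where
  "depth_subgroup G T \<alpha> V \<longleftrightarrow> subgroup V G \<and> openin T V
     \<and> (\<Inter>k::int. aut_pow G \<alpha> k ` V) = {\<one>\<^bsub>G\<^esub>}"

definition finite_depth :: "('a, 'b) monoid_scheme \<Rightarrow> 'a topology \<Rightarrow> ('a \<Rightarrow> 'a) \<Rightarrow> bool" where
  "finite_depth G T \<alpha> \<longleftrightarrow> (\<exists>V. depth_subgroup G T \<alpha> V)"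

text \<open>The index [alpha(V_+) : V_+] as the number of right cosets of V_+ contained in
alpha(V_+) (Isabelle's card: 0 if infinitely many).\<close>
definition plus_index :: "('a, 'b) monoid_scheme \<Rightarrow> ('a \<Rightarrow> 'a) \<Rightarrow> 'a set \<Rightarrow> nat" where
  "plus_index G \<alpha> V = card ((\<lambda>x. V_plus G \<alpha> V #>\<^bsub>G\<^esub> x) ` (\<alpha> ` V_plus G \<alpha> V))"

end

theory Submission
  imports Defs
begin


locale autgrp = group G for G (structure) +
  fixes \<alpha>
  assumes iso: "\<alpha> \<in> iso G G"
begin

abbreviation "\<beta> \<equiv> inv_into (carrier G) \<alpha>"
abbreviation "a \<equiv> aut_pow G \<alpha>"

lemma hom_a: "\<alpha> \<in> hom G G" using iso by (simp add: iso_def)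
lemma bij: "bij_betw \<alpha> (carrier G) (carrier G)" using iso by (simp add: iso_def)
lemma inj: "inj_on \<alpha> (carrier G)" using bij by (simp add: bij_betw_def)
lemma img: "\<alpha> ` carrier G = carrier G" using bij by (simp add: bij_betw_def)
lemma al_car: "x \<in> carrier G \<Longrightarrow> \<alpha> x \<in> carrier G" using img by blast
lemma be_car: "x \<in> carrier G \<Longrightarrow> \<beta> x \<in> carrier G" using img inv_into_into[of x \<alpha> "carrier G"] by simp
lemma al_be: "x \<in> carrier G \<Longrightarrow> \<alpha> (\<beta> x) = x" using img f_inv_into_f[of x \<alpha> "carrier G"] by simp
lemma be_al: "x \<in> carrier G \<Longrightarrow> \<beta> (\<alpha> x) = x" using inj by (simp add: inv_into_f_f)
lemma al_mult: "x \<in> carrier G \<Longrightarrow> y \<in> carrier G \<Longrightarrow> \<alpha> (x \<otimes> y) = \<alpha> x \<otimes> \<alpha> y"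
  using hom_a by (simp add: hom_mult)
lemma be_mult: "x \<in> carrier G \<Longrightarrow> y \<in> carrier G \<Longrightarrow> \<beta> (x \<otimes> y) = \<beta> x \<otimes> \<beta> y"
proof -
  assume x: "x \<in> carrier G" and y: "y \<in> carrier G"
  have "\<alpha> (\<beta> x \<otimes> \<beta> y) = x \<otimes> y" using x y by (simp add: al_mult be_car al_be)
  then have "\<beta> (x \<otimes> y) = \<beta> (\<alpha> (\<beta> x \<otimes> \<beta> y))" by simp
  also have "... = \<beta> x \<otimes> \<beta> y" using x y by (simp add: be_al be_car)
  finally show ?thesis .
qed

lemma beta_pow_car: "x \<in> carrier G \<Longrightarrow> (\<beta> ^^ n) x \<in> carrier G"
  by (induction n) (auto simp: be_car)
lemma alpha_pow_car: "x \<in> carrier G \<Longrightarrow> (\<alpha> ^^ n) x \<in> carrier G"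
  by (induction n) (auto simp: al_car)

lemma a_car: "x \<in> carrier G \<Longrightarrow> a k x \<in> carrier G"
  by (simp add: aut_pow_def beta_pow_car alpha_pow_car)

lemma a0: "a 0 x = x" by (simp add: aut_pow_def)

lemma a_succ: "x \<in> carrier G \<Longrightarrow> a (k+1) x = \<alpha> (a k x)"
proof (cases "0 \<le> k")
  case True
  then have "nat (k+1) = Suc (nat k)" by simp
  then show ?thesis using True by (simp add: aut_pow_def)
next
  case False
  assume x: "x \<in> carrier G"
  show ?thesis
  proof (cases "k = -1")
    case True
    then show ?thesis using x by (simp add: aut_pow_def al_be)
  next
    case False
    with \<open>\<not> 0 \<le> k\<close> have "nat (-k) = Suc (nat (-(k+1)))" "\<not> 0 \<le> k+1" by auto
    then show ?thesis using x \<open>\<not> 0 \<le> k\<close> by (simp add: aut_pow_def al_be beta_pow_car)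
  qed
qed

lemma a_pred: "x \<in> carrier G \<Longrightarrow> a (k-1) x = \<beta> (a k x)"
  by (metis a_car a_succ be_al diff_add_cancel)

lemma a1: "x \<in> carrier G \<Longrightarrow> a 1 x = \<alpha> x"
  using a_succ[of x 0] by (simp add: a0)
lemma am1: "x \<in> carrier G \<Longrightarrow> a (-1) x = \<beta> x"
  using a_pred[of x 0] by (simp add: a0)

lemma a_add: "x \<in> carrier G \<Longrightarrow> a i (a k x) = a (i+k) x"
proof (induction i rule: int_induct[where k=0])
  case base then show ?case by (simp add: a0)
next
  case (step1 i)
  then show ?case using a_succ[of "a k x" i] a_succ[of x "i+k"] a_car
    by (simp add: algebra_simps)
next
  case (step2 i)
  then show ?case using a_pred[of "a k x" i] a_pred[of x "i+k"] a_car
    by (simp add: algebra_simps)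
qed

lemma a_mult: "x \<in> carrier G \<Longrightarrow> y \<in> carrier G \<Longrightarrow> a k (x \<otimes> y) = a k x \<otimes> a k y"
proof (induction k rule: int_induct[where k=0])
  case base then show ?case by (simp add: a0)
next
  case (step1 i)
  then show ?case by (simp add: a_succ al_mult a_car)
next
  case (step2 i)
  then show ?case by (simp add: a_pred be_mult a_car)
qed

lemma a_hom: "group_hom G G (a k)"
  by (unfold_locales) (auto simp: hom_def a_car a_mult)

lemma a_one: "a k \<one> = \<one>" using group_hom.hom_one[OF a_hom] .
lemma a_inv: "x \<in> carrier G \<Longrightarrow> a k (inv x) = inv (a k x)"
  using group_hom.hom_inv[OF a_hom] by simp

lemma a_image: "S \<subseteq> carrier G \<Longrightarrow> a k ` S = {x \<in> carrier G. a (-k) x \<in> S}"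
proof
  assume S: "S \<subseteq> carrier G"
  show "a k ` S \<subseteq> {x \<in> carrier G. a (-k) x \<in> S}"
    using S by (auto simp: a_car a_add a0)
  show "{x \<in> carrier G. a (-k) x \<in> S} \<subseteq> a k ` S"
  proof
    fix x assume "x \<in> {x \<in> carrier G. a (-k) x \<in> S}"
    then have "x = a k (a (-k) x)" "a (-k) x \<in> S" by (auto simp: a_add a0)
    then show "x \<in> a k ` S" by blast
  qed
qed

definition Q where "Q V m = {x \<in> carrier G. \<forall>k\<le>m. a k x \<in> V}"

lemma Q_sub: "Q V m \<subseteq> carrier G" by (auto simp: Q_def)

lemma Q_subgroup: "subgroup V G \<Longrightarrow> subgroup (Q V m) G"
  by (rule subgroup.intro) (auto simp: Q_def a_mult a_one a_inv subgroup.m_closed subgroup.one_closed subgroup.m_inv_closed)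

lemma Q_mono: "m \<le> m' \<Longrightarrow> Q V m' \<subseteq> Q V m" by (auto simp: Q_def)

lemma Q_alpha: "\<alpha> ` Q V m = Q V (m-1)"
proof
  show "\<alpha> ` Q V m \<subseteq> Q V (m-1)"
  proof
    fix y assume "y \<in> \<alpha> ` Q V m"
    then obtain x where x: "x \<in> Q V m" "y = \<alpha> x" by blast
    then have xc: "x \<in> carrier G" by (simp add: Q_def)
    have "a k y = a (k+1) x" for k using xc x by (simp add: a1[symmetric] a_add)
    then show "y \<in> Q V (m-1)" using x xc by (auto simp: Q_def al_car)
  qed
  show "Q V (m-1) \<subseteq> \<alpha> ` Q V m"
  proof
    fix y assume y: "y \<in> Q V (m-1)"
    then have yc: "y \<in> carrier G" by (simp add: Q_def)
    have "a k (\<beta> y) = a (k-1) y" for k using yc by (simp add: am1[symmetric] a_add)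
    then have "\<beta> y \<in> Q V m" using y yc by (auto simp: Q_def be_car)
    moreover have "y = \<alpha> (\<beta> y)" using yc by (simp add: al_be)
    ultimately show "y \<in> \<alpha> ` Q V m" by blast
  qed
qed

lemma V_plus_Q: "V \<subseteq> carrier G \<Longrightarrow> V_plus G \<alpha> V = Q V 0"
proof -
  assume V: "V \<subseteq> carrier G"
  have "V_plus G \<alpha> V = (\<Inter>k::nat. {x \<in> carrier G. a (- int k) x \<in> V})"
    unfolding V_plus_def using a_image[OF V] by simp
  also have "... = Q V 0"
  proof (auto simp: Q_def)
    fix x k assume "\<forall>k. a (- int k) x \<in> V" "(k::int) \<le> 0"
    then show "a k x \<in> V" by (metis add.inverse_inverse nat_0_le neg_0_le_iff_le)
  qed
  finally show ?thesis .
qed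

lemma V_minus_eq: "V \<subseteq> carrier G \<Longrightarrow> V_minus G \<alpha> V = {x \<in> carrier G. \<forall>k::nat. a (int k) x \<in> V}"
  unfolding V_minus_def using a_image[of V] by auto

end


context group begin

definition cos where "cos H K = (\<lambda>x. H #> x) ` K"

lemma L1a: "K' \<subseteq> K \<Longrightarrow> finite (cos H K) \<Longrightarrow> finite (cos H K') \<and> card (cos H K') \<le> card (cos H K)"
  unfolding cos_def by (meson card_mono finite_subset image_mono)

lemma setmult_rcos: "subgroup H G \<Longrightarrow> subgroup H' G \<Longrightarrow> H \<subseteq> H' \<Longrightarrow> x \<in> carrier G
   \<Longrightarrow> H' <#> (H #> x) = H' #> x"
proof
  assume H: "subgroup H G" and H': "subgroup H' G" and HH: "H \<subseteq> H'" and x: "x \<in> carrier G"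
  show "H' <#> (H #> x) \<subseteq> H' #> x"
  proof
    fix z assume "z \<in> H' <#> (H #> x)"
    then obtain h' h where z: "z = h' \<otimes> (h \<otimes> x)" "h' \<in> H'" "h \<in> H"
      by (auto simp: set_mult_def r_coset_def)
    then have "z = (h' \<otimes> h) \<otimes> x" using H H' x
      by (simp add: m_assoc subgroup.mem_carrier)
    moreover have "h' \<otimes> h \<in> H'" using z HH H' by (simp add: subgroup.m_closed subset_iff)
    ultimately show "z \<in> H' #> x" by (auto simp: r_coset_def)
  qed
  show "H' #> x \<subseteq> H' <#> (H #> x)"
  proof
    fix z assume "z \<in> H' #> x"
    then obtain h' where z: "z = h' \<otimes> x" "h' \<in> H'" by (auto simp: r_coset_def)
    have "x \<in> H #> x" using rcos_self[OF x H] .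
    then show "z \<in> H' <#> (H #> x)" using z by (auto simp: set_mult_def)
  qed
qed

lemma L1b:
  assumes H: "subgroup H G" and H': "subgroup H' G" and HH: "H \<subseteq> H'" and K: "K \<subseteq> carrier G"
    and fin: "finite (cos H K)"
  shows "finite (cos H' K) \<and> card (cos H' K) \<le> card (cos H K)"
proof -
  have "cos H' K = (\<lambda>S. H' <#> S) ` cos H K"
    unfolding cos_def image_image using setmult_rcos[OF H H' HH] K by (auto intro!: image_cong)
  then show ?thesis using fin by (simp add: card_image_le)
qed

lemma rcos_eq_of_mem:
  assumes K: "subgroup K G" and x: "x \<in> carrier G" and y: "y \<in> K #> x"
  shows "K #> y = K #> x"
  using repr_independence[OF y x K] by simp

lemma L2:
  assumes H: "subgroup H G" and K: "subgroup K G" and L: "subgroup L G"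
    and HK: "H \<subseteq> K" and KL: "K \<subseteq> L"
    and f1: "finite (cos K L)" and f2: "finite (cos H K)"
  shows "finite (cos H L) \<and> card (cos H L) = card (cos K L) * card (cos H K)"
proof -
  have Lc: "L \<subseteq> carrier G" using subgroup.subset[OF L] .
  have Kc: "K \<subseteq> carrier G" using subgroup.subset[OF K] .
  have Hc: "H \<subseteq> carrier G" using subgroup.subset[OF H] .
  define fib where "fib C = (\<lambda>y. H #> y) ` C" for C
  have U: "cos H L = (\<Union>C\<in>cos K L. fib C)"
  proof
    show "cos H L \<subseteq> (\<Union>C\<in>cos K L. fib C)"
    proof
      fix S assume "S \<in> cos H L"
      then obtain y where y: "y \<in> L" "S = H #> y" by (auto simp: cos_def)
      have "y \<in> K #> y" using y Lc K by (simp add: rcos_self subset_iff)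
      then show "S \<in> (\<Union>C\<in>cos K L. fib C)" using y by (auto simp: cos_def fib_def)
    qed
    show "(\<Union>C\<in>cos K L. fib C) \<subseteq> cos H L"
    proof
      fix S assume "S \<in> (\<Union>C\<in>cos K L. fib C)"
      then obtain x y where xy: "x \<in> L" "y \<in> K #> x" "S = H #> y" by (auto simp: cos_def fib_def)
      then obtain k where k: "k \<in> K" "y = k \<otimes> x" by (auto simp: r_coset_def)
      then have "y \<in> L" using xy KL L by (simp add: subgroup.m_closed subset_iff)
      then show "S \<in> cos H L" using xy by (auto simp: cos_def)
    qed
  qed
  have cardfib: "finite (fib C) \<and> card (fib C) = card (cos H K)" if CC: "C \<in> cos K L" for C
  proof -
    obtain x where x: "x \<in> L" "C = K #> x" using CC unfolding cos_def by blast
    have xc: "x \<in> carrier G" using x Lc by auto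
    have "fib C = (\<lambda>S. S #> x) ` cos H K"
    proof -
      have "fib C = (\<lambda>k. H #> (k \<otimes> x)) ` K"
        unfolding fib_def x(2) r_coset_def by (auto simp: image_iff)
      also have "... = (\<lambda>k. (H #> k) #> x) ` K"
        using Hc Kc xc by (auto simp: coset_mult_assoc intro!: image_cong)
      finally show ?thesis by (simp add: cos_def image_image)
    qed
    moreover have "inj_on (\<lambda>S. S #> x) (cos H K)"
    proof (rule inj_onI)
      fix S1 S2 assume "S1 \<in> cos H K" "S2 \<in> cos H K" "S1 #> x = S2 #> x"
      moreover have "(S #> x) #> inv x = S" if SS: "S \<in> cos H K" for S
      proof -
        obtain k where k: "k \<in> K" "S = H #> k" using SS unfolding cos_def by blast
        have Sc: "S \<subseteq> carrier G" using k Kc r_coset_subset_G[OF Hc, of k] by auto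
        show ?thesis using coset_mult_assoc[OF Sc xc inv_closed[OF xc]] Sc xc by simp
      qed
      ultimately show "S1 = S2" by metis
    qed
    ultimately show ?thesis using f2 by (simp add: card_image)
  qed
  have disj: "fib C1 \<inter> fib C2 = {}" if CC: "C1 \<in> cos K L" "C2 \<in> cos K L" "C1 \<noteq> C2" for C1 C2
  proof (rule ccontr)
    assume "fib C1 \<inter> fib C2 \<noteq> {}"
    then obtain y1 y2 where y: "y1 \<in> C1" "y2 \<in> C2" "H #> y1 = H #> y2" by (auto simp: fib_def)
    obtain x1 where x1: "x1 \<in> L" "C1 = K #> x1" using CC(1) unfolding cos_def by blast
    obtain x2 where x2: "x2 \<in> L" "C2 = K #> x2" using CC(2) unfolding cos_def by blast
    have y1c: "y1 \<in> carrier G" using y(1) x1 Lc Kc r_coset_subset_G[OF Kc, of x1] by auto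
    have y2c: "y2 \<in> carrier G" using y(2) x2 Lc Kc r_coset_subset_G[OF Kc, of x2] by auto
    have "y1 \<in> H #> y2" using y(3) rcos_self[OF y1c H] by simp
    then have "y1 \<in> K #> y2" using HK by (auto simp: r_coset_def)
    then have "K #> y1 = K #> y2" using rcos_eq_of_mem[OF K y2c] by simp
    moreover have "C1 = K #> y1" using rcos_eq_of_mem[OF K _ y(1)[unfolded x1(2)]] x1 Lc by auto
    moreover have "C2 = K #> y2" using rcos_eq_of_mem[OF K _ y(2)[unfolded x2(2)]] x2 Lc by auto
    ultimately show False using CC(3) by simp
  qed
  have "card (cos H L) = (\<Sum>C\<in>cos K L. card (fib C))"
    unfolding U by (rule card_UN_disjoint) (use f1 cardfib disj in auto)
  also have "... = card (cos K L) * card (cos H K)" using cardfib by simp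
  finally show ?thesis using U f1 cardfib by auto
qed

lemma L4:
  assumes K: "subgroup K G" and V: "subgroup V G" and fin: "finite (cos V (carrier G))"
  shows "finite (cos (K \<inter> V) K)"
proof -
  have Kc: "K \<subseteq> carrier G" using subgroup.subset[OF K] .
  have "cos (K \<inter> V) K = (\<lambda>S. S \<inter> K) ` cos V K"
    unfolding cos_def image_image
  proof (rule image_cong[OF refl])
    fix x assume x: "x \<in> K"
    then have xc: "x \<in> carrier G" using Kc by auto
    show "(K \<inter> V) #> x = (V #> x) \<inter> K"
    proof
      show "(K \<inter> V) #> x \<subseteq> (V #> x) \<inter> K"
        using x K by (auto simp: r_coset_def subgroup.m_closed)
      show "(V #> x) \<inter> K \<subseteq> (K \<inter> V) #> x"
      proof
        fix z assume z: "z \<in> (V #> x) \<inter> K"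
        then obtain v where v: "v \<in> V" "z = v \<otimes> x" by (auto simp: r_coset_def)
        have vc: "v \<in> carrier G" using subgroup.mem_carrier[OF V v(1)] .
        have "v = z \<otimes> inv x" using v vc xc by (simp add: m_assoc)
        then have "v \<in> K" using z x K by (simp add: subgroup.m_closed subgroup.m_inv_closed)
        then show "z \<in> (K \<inter> V) #> x" using v by (auto simp: r_coset_def)
      qed
    qed
  qed
  moreover have "finite (cos V K)" using L1a[OF Kc fin] by simp
  ultimately show ?thesis by simp
qed

end


context autgrp begin

lemma L3:
  assumes H: "H \<subseteq> carrier G" and K: "K \<subseteq> carrier G"
  shows "cos (\<alpha> ` H) (\<alpha> ` K) = (\<lambda>S. \<alpha> ` S) ` cos H K"
    and "inj_on (\<lambda>S. \<alpha> ` S) (cos H K)"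
proof -
  have e: "\<alpha> ` (H #> x) = (\<alpha> ` H) #> \<alpha> x" if "x \<in> K" for x
  proof -
    have xc: "x \<in> carrier G" using that K by auto
    show ?thesis unfolding r_coset_def using H xc by (force simp: al_mult)
  qed
  show "cos (\<alpha> ` H) (\<alpha> ` K) = (\<lambda>S. \<alpha> ` S) ` cos H K"
    unfolding cos_def image_image using e by (auto simp: image_iff)
  show "inj_on (\<lambda>S. \<alpha> ` S) (cos H K)"
  proof (rule inj_onI)
    fix S1 S2 assume "S1 \<in> cos H K" "S2 \<in> cos H K" "\<alpha> ` S1 = \<alpha> ` S2"
    moreover have "S \<in> cos H K \<Longrightarrow> S \<subseteq> carrier G" for S
      using H K unfolding cos_def by (force simp: r_coset_def)
    ultimately show "S1 = S2" using inj_on_image_eq_iff[OF inj] by metis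
  qed
qed

lemma L3c:
  assumes H: "H \<subseteq> carrier G" and K: "K \<subseteq> carrier G"
  shows "finite (cos (\<alpha> ` H) (\<alpha> ` K)) = finite (cos H K)"
    and "card (cos (\<alpha> ` H) (\<alpha> ` K)) = card (cos H K)"
  using L3[OF H K] by (auto simp: finite_image_iff card_image)

lemma card1:
  assumes H: "subgroup H G" and HK: "H \<subseteq> K" and K: "K \<subseteq> carrier G" and c: "card (cos H K) = 1"
  shows "K \<subseteq> H"
proof
  fix x assume x: "x \<in> K"
  have "H #> \<one> \<in> cos H K" using H HK unfolding cos_def by (blast intro: subgroup.one_closed)
  moreover have "H #> x \<in> cos H K" using x unfolding cos_def by blast
  ultimately have "H #> x = H #> \<one>" using c by (metis card_1_singletonE singletonD)
  then have "H #> x = H" using H by (simp add: subgroup.subset)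
  moreover have "x \<in> H #> x" using x K H by (simp add: rcos_self subset_iff)
  ultimately show "x \<in> H" by simp
qed

lemma cos_self:
  assumes H: "subgroup H G" shows "cos H H = {H}"
proof -
  have "(\<lambda>x. H #> x) ` H = (\<lambda>x. H) ` H"
    by (rule image_cong[OF refl]) (rule coset_join2[OF subgroup.mem_carrier[OF H] H])
  moreover have "\<one> \<in> H" by (rule subgroup.one_closed[OF H])
  ultimately show ?thesis unfolding cos_def by auto
qed

end

lemma pow_bound:
  fixes a b c :: nat
  assumes b: "1 \<le> b" and h: "\<And>j. a ^ j \<le> b ^ (c + j)"
  shows "a \<le> b"
proof (rule ccontr)
  assume "\<not> a \<le> b"
  then have ab: "real b < real a" by simp
  have bp: "0 < real b" using b by simp
  have "1 < real a / real b" using ab bp by simp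
  then obtain j where j: "real (b ^ c) < (real a / real b) ^ j" using real_arch_pow by blast
  then have "real (b ^ c) * real b ^ j < real a ^ j"
    using bp by (simp add: power_divide field_simps)
  then have "real (b ^ (c + j)) < real (a ^ j)" by (simp add: power_add)
  then have "b ^ (c + j) < a ^ j" by linarith
  with h[of j] show False by simp
qed

locale topaut = autgrp G \<alpha> for G (structure) and \<alpha> + fixes T
  assumes tg: "topological_group G T" and cpt: "compact_space T" and hm: "homeomorphic_map T T \<alpha>"
begin

lemma top: "topspace T = carrier G" using tg by (simp add: topological_group_def)

lemma rtrans: "c \<in> carrier G \<Longrightarrow> continuous_map T T (\<lambda>x. x \<otimes> c)"
proof -
  assume c: "c \<in> carrier G"
  have "continuous_map T (prod_topology T T) (\<lambda>x. (x, c))"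
    using c top by (simp add: continuous_map_paired)
  moreover have "continuous_map (prod_topology T T) T (\<lambda>(x, y). x \<otimes> y)"
    using tg by (simp add: topological_group_def)
  ultimately have "continuous_map T T ((\<lambda>(x, y). x \<otimes> y) \<circ> (\<lambda>x. (x, c)))"
    by (rule continuous_map_compose)
  then show ?thesis by (simp add: o_def)
qed

lemma coset_open:
  assumes V: "subgroup V G" "openin T V" and c: "c \<in> carrier G"
  shows "openin T (V #> c)"
proof -
  have "V #> c = {x \<in> topspace T. x \<otimes> inv c \<in> V}"
  proof
    show "V #> c \<subseteq> {x \<in> topspace T. x \<otimes> inv c \<in> V}"
      using V c by (auto simp: r_coset_def top m_assoc subgroup.mem_carrier)
    show "{x \<in> topspace T. x \<otimes> inv c \<in> V} \<subseteq> V #> c"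
    proof
      fix x assume x: "x \<in> {x \<in> topspace T. x \<otimes> inv c \<in> V}"
      then have xc: "x \<in> carrier G" by (simp add: top)
      have "x = (x \<otimes> inv c) \<otimes> c" using xc c by (simp add: m_assoc)
      then show "x \<in> V #> c" using x unfolding r_coset_def by blast
    qed
  qed
  then show ?thesis using openin_continuous_map_preimage[OF rtrans[of "inv c"] V(2)] c by simp
qed

lemma V_closed:
  assumes V: "subgroup V G" "openin T V"
  shows "closedin T V"
proof -
  have "topspace T - V = (\<Union>c\<in>carrier G - V. V #> c)"
  proof
    show "topspace T - V \<subseteq> (\<Union>c\<in>carrier G - V. V #> c)"
      using V by (auto simp: top intro: rcos_self)
    show "(\<Union>c\<in>carrier G - V. V #> c) \<subseteq> topspace T - V"
    proof
      fix y assume "y \<in> (\<Union>c\<in>carrier G - V. V #> c)"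
      then obtain c v where cv: "c \<in> carrier G" "c \<notin> V" "v \<in> V" "y = v \<otimes> c"
        by (auto simp: r_coset_def)
      have vc: "v \<in> carrier G" using subgroup.mem_carrier[OF V(1) cv(3)] .
      have yc: "y \<in> carrier G" using cv vc by simp
      have "y \<notin> V"
      proof
        assume yV: "y \<in> V"
        have ceq: "c = inv v \<otimes> y" using cv vc yc by (simp add: inv_solve_left)
        have "inv v \<otimes> y \<in> V" by (rule subgroup.m_closed[OF V(1) subgroup.m_inv_closed[OF V(1) cv(3)] yV])
        then have "c \<in> V" by (subst ceq)
        then show False using cv by simp
      qed
      then show "y \<in> topspace T - V" using yc top by simp
    qed
  qed
  moreover have "openin T (\<Union>c\<in>carrier G - V. V #> c)"
    using coset_open[OF V] by auto
  ultimately show ?thesis using V by (simp add: closedin_def top subgroup.subset)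
qed

lemma FC:
  assumes V: "subgroup V G" "openin T V"
  shows "finite (cos V (carrier G))"
proof -
  have "\<forall>U\<in>cos V (carrier G). openin T U" using coset_open[OF V] by (auto simp: cos_def)
  moreover have "topspace T \<subseteq> \<Union>(cos V (carrier G))"
    using V by (auto simp: cos_def top intro: rcos_self)
  ultimately obtain F where F: "finite F" "F \<subseteq> cos V (carrier G)" "topspace T \<subseteq> \<Union>F"
    using cpt unfolding compact_space_alt by meson
  have "cos V (carrier G) \<subseteq> F"
  proof
    fix C assume "C \<in> cos V (carrier G)"
    then obtain x where x: "x \<in> carrier G" "C = V #> x" by (auto simp: cos_def)
    then obtain D where D: "D \<in> F" "x \<in> D" using F top by auto
    then obtain y where y: "y \<in> carrier G" "D = V #> y" using F by (auto simp: cos_def)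
    have "V #> x = V #> y" using rcos_eq_of_mem[OF V(1) y(1)] D y by simp
    then show "C \<in> F" using x y D by simp
  qed
  then show ?thesis using F finite_subset by blast
qed

lemma al_cont: "continuous_map T T \<alpha>" using hm homeomorphic_imp_continuous_map by blast

lemma be_cont: "continuous_map T T \<beta>"
proof -
  obtain g where g: "homeomorphic_maps T T \<alpha> g" using hm homeomorphic_map_maps by blast
  then have gc: "continuous_map T T g" and gi: "\<And>y. y \<in> carrier G \<Longrightarrow> \<alpha> (g y) = y"
    and gcar: "\<And>y. y \<in> carrier G \<Longrightarrow> g y \<in> carrier G"
    by (auto simp: homeomorphic_maps_def top continuous_map_def)
  show ?thesis
  proof (rule continuous_map_eq[OF gc])
    fix y assume "y \<in> topspace T"
    then have y: "y \<in> carrier G" by (simp add: top)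
    have "\<beta> y = \<beta> (\<alpha> (g y))" using gi[OF y] by simp
    also have "... = g y" using gcar[OF y] by (simp add: be_al)
    finally show "g y = \<beta> y" by simp
  qed
qed

lemma a_cont: "continuous_map T T (a k)"
proof (induction k rule: int_induct[where k=0])
  case base
  then show ?case by (simp add: a0 continuous_map_id[unfolded id_def])
next
  case (step1 i)
  show ?case
    by (rule continuous_map_eq[OF continuous_map_compose[OF step1(2) al_cont]])
       (simp add: a_succ top)
next
  case (step2 i)
  show ?case
    by (rule continuous_map_eq[OF continuous_map_compose[OF step2(2) be_cont]])
       (simp add: a_pred top)
qed

lemma depth_elem:
  assumes d: "depth_subgroup G T \<alpha> V" and x: "x \<in> carrier G" and h: "\<forall>k. a k x \<in> V"
  shows "x = \<one>"
proof -
  have V: "subgroup V G" and e: "(\<Inter>k::int. a k ` V) = {\<one>}"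
    using d by (auto simp: depth_subgroup_def)
  have "x \<in> a k ` V" for k using a_image[OF subgroup.subset[OF V]] x h by simp
  then have "x \<in> (\<Inter>k::int. a k ` V)" by blast
  then show ?thesis using e by simp
qed

lemma compactness:
  assumes d: "depth_subgroup G T \<alpha> V" and W: "subgroup W G" "openin T W"
  shows "\<exists>N::nat. \<forall>x\<in>carrier G. (\<forall>k. \<bar>k\<bar> \<le> int N \<longrightarrow> a k x \<in> V) \<longrightarrow> x \<in> W"
proof -
  have V: "subgroup V G" "openin T V" using d by (auto simp: depth_subgroup_def)
  define U where "U k = {x \<in> topspace T. a k x \<in> topspace T - V}" for k
  have Uo: "openin T (U k)" for k
    unfolding U_def
    by (rule openin_continuous_map_preimage[OF a_cont]) (use V_closed[OF V] in \<open>simp add: closedin_def\<close>)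
  have "\<forall>S\<in>insert W (range U). openin T S" using Uo W by auto
  moreover have "topspace T \<subseteq> \<Union>(insert W (range U))"
  proof
    fix x assume xt: "x \<in> topspace T"
    then have x: "x \<in> carrier G" by (simp add: top)
    show "x \<in> \<Union>(insert W (range U))"
    proof (cases "x \<in> W")
      case True then show ?thesis by simp
    next
      case False
      then have "x \<noteq> \<one>" using subgroup.one_closed[OF W(1)] by auto
      then obtain k where "a k x \<notin> V" using depth_elem[OF d x] by blast
      then have "x \<in> U k" using x a_car[OF x] by (simp add: U_def top)
      then show ?thesis by blast
    qed
  qed
  ultimately obtain F where F: "finite F" "F \<subseteq> insert W (range U)" "topspace T \<subseteq> \<Union>F"
    using cpt unfolding compact_space_alt by meson
  have "F - {W} \<subseteq> U ` UNIV" using F by auto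
  then obtain K where K: "finite K" "F - {W} = U ` K"
    using finite_subset_image[of "F - {W}" U UNIV] F by auto
  define N where "N = nat (\<Sum>k\<in>K. \<bar>k\<bar>)"
  have kN: "\<bar>k\<bar> \<le> int N" if "k \<in> K" for k
  proof -
    have "\<bar>k\<bar> \<le> (\<Sum>k\<in>K. \<bar>k\<bar>)" by (rule member_le_sum) (use that K in auto)
    moreover have "0 \<le> (\<Sum>k\<in>K. \<bar>k\<bar>)" by (simp add: sum_nonneg)
    ultimately show ?thesis by (simp add: N_def)
  qed
  show ?thesis
  proof (intro exI ballI impI)
    fix x assume x: "x \<in> carrier G" and h: "\<forall>k. \<bar>k\<bar> \<le> int N \<longrightarrow> a k x \<in> V"
    then obtain C where C: "C \<in> F" "x \<in> C" using F top by auto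
    show "x \<in> W"
    proof (cases "C = W")
      case True then show ?thesis using C by simp
    next
      case False
      then have "C \<in> U ` K" using C K by auto
      then obtain k where k: "k \<in> K" "C = U k" by auto
      then have "a k x \<notin> V" using C by (simp add: U_def)
      then show ?thesis using h kN[OF k(1)] by simp
    qed
  qed
qed

lemma Q_incl:
  assumes N: "\<forall>x\<in>carrier G. (\<forall>k. \<bar>k\<bar> \<le> int N \<longrightarrow> a k x \<in> V) \<longrightarrow> x \<in> W"
  shows "Q V m \<subseteq> Q W (m - int N)"
proof
  fix x assume x: "x \<in> Q V m"
  then have xc: "x \<in> carrier G" by (simp add: Q_def)
  have "a k x \<in> W" if k: "k \<le> m - int N" for k
  proof -
    have "a i (a k x) \<in> V" if "\<bar>i\<bar> \<le> int N" for i
      using x that k xc by (simp add: a_add Q_def)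
    then show ?thesis using N a_car[OF xc] by blast
  qed
  then show "x \<in> Q W (m - int N)" using xc by (simp add: Q_def)
qed

definition nidx where "nidx V = card (cos (Q V 0) (Q V (-1)))"

lemma idx_step:
  assumes V: "subgroup V G" "openin T V"
  shows "finite (cos (Q V m) (Q V (m-1))) \<and> card (cos (Q V m) (Q V (m-1))) = nidx V"
proof -
  define P where "P m \<longleftrightarrow> finite (cos (Q V m) (Q V (m-1))) \<and> card (cos (Q V m) (Q V (m-1))) = nidx V" for m
  have sh: "P m \<longleftrightarrow> P (m - 1)" for m
    unfolding P_def using L3c[OF Q_sub Q_sub, of V m V "m-1"] by (simp add: Q_alpha)
  have "Q V 0 = Q V (-1) \<inter> V"
  proof
    show "Q V 0 \<subseteq> Q V (-1) \<inter> V" using a0[of "x"] by (auto simp: Q_def) (metis a0 order_refl)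
    show "Q V (-1) \<inter> V \<subseteq> Q V 0"
    proof
      fix x assume x: "x \<in> Q V (-1) \<inter> V"
      have "a k x \<in> V" if "k \<le> 0" for k
      proof (cases "k = 0")
        case True then show ?thesis using x by (simp add: a0)
      next
        case False then show ?thesis using x that by (simp add: Q_def)
      qed
      then show "x \<in> Q V 0" using x by (simp add: Q_def)
    qed
  qed
  then have "finite (cos (Q V 0) (Q V (-1)))" using L4[OF Q_subgroup[OF V(1)] V(1) FC[OF V]] by simp
  then have "P 0" by (simp add: P_def nidx_def)
  then have "P m"
  proof (induction m rule: int_induct[where k=0])
    case base then show ?case .
  next
    case (step1 i) then show ?case using sh[of "i+1"] by simp
  next
    case (step2 i) then show ?case using sh[of i] by simp
  qed
  then show ?thesis by (simp add: P_def)
qed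

lemma chain:
  assumes V: "subgroup V G" "openin T V"
  shows "finite (cos (Q V m) (Q V (m - int j))) \<and> card (cos (Q V m) (Q V (m - int j))) = nidx V ^ j"
proof (induction j)
  case 0
  then show ?case using cos_self[OF Q_subgroup[OF V(1)]] by simp
next
  case (Suc j)
  have e: "m - int (Suc j) = (m - int j) - 1" by simp
  have s: "finite (cos (Q V (m - int j)) (Q V (m - int j - 1)))"
     "card (cos (Q V (m - int j)) (Q V (m - int j - 1))) = nidx V"
    using idx_step[OF V, of "m - int j"] by auto
  have "finite (cos (Q V m) (Q V (m - int j - 1))) \<and> card (cos (Q V m) (Q V (m - int j - 1)))
     = card (cos (Q V (m - int j)) (Q V (m - int j - 1))) * card (cos (Q V m) (Q V (m - int j)))"
    by (rule L2[OF Q_subgroup[OF V(1)] Q_subgroup[OF V(1)] Q_subgroup[OF V(1)] Q_mono Q_mono s(1)])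
       (use Suc in auto)
  then show ?case unfolding e using s Suc by simp
qed

lemma nidx_pos:
  assumes V: "subgroup V G" "openin T V"
  shows "1 \<le> nidx V"
proof -
  have "finite (cos (Q V 0) (Q V (-1)))" using idx_step[OF V, of 0] by simp
  moreover have "cos (Q V 0) (Q V (-1)) \<noteq> {}"
    using subgroup.one_closed[OF Q_subgroup[OF V(1)]] by (auto simp: cos_def)
  ultimately show ?thesis unfolding nidx_def by (simp add: Suc_le_eq card_gt_0_iff)
qed

end


context topaut begin

lemma part2:
  assumes dV: "depth_subgroup G T \<alpha> V" and dW: "depth_subgroup G T \<alpha> W"
  shows "nidx W \<le> nidx V"
proof -
  have V: "subgroup V G" "openin T V" and W: "subgroup W G" "openin T W"
    using dV dW by (auto simp: depth_subgroup_def)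
  obtain N where N: "\<forall>x\<in>carrier G. (\<forall>k. \<bar>k\<bar> \<le> int N \<longrightarrow> a k x \<in> V) \<longrightarrow> x \<in> W"
    using compactness[OF dV W] by blast
  obtain M where M: "\<forall>x\<in>carrier G. (\<forall>k. \<bar>k\<bar> \<le> int M \<longrightarrow> a k x \<in> W) \<longrightarrow> x \<in> V"
    using compactness[OF dW V] by blast
  have "nidx W ^ j \<le> nidx V ^ ((N + M) + j)" for j
  proof -
    have i1: "Q V 0 \<subseteq> Q W (- int N)" using Q_incl[OF N, of 0] by simp
    have i2: "Q W (- int N - int j) \<subseteq> Q V (0 - int (N + M + j))"
    proof -
      have e: "- int N - int j - int M = 0 - int (N + M + j)" by simp
      show ?thesis by (subst e[symmetric]) (rule Q_incl[OF M])
    qed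
    have c1: "card (cos (Q W (- int N)) (Q W (- int N - int j))) = nidx W ^ j"
      using chain[OF W, of "- int N" j] by simp
    have c2: "finite (cos (Q V 0) (Q V (0 - int (N + M + j))))"
         "card (cos (Q V 0) (Q V (0 - int (N + M + j)))) = nidx V ^ (N + M + j)"
      using chain[OF V, of 0 "N + M + j"] by auto
    have f3: "finite (cos (Q V 0) (Q W (- int N - int j)))"
       "card (cos (Q V 0) (Q W (- int N - int j))) \<le> nidx V ^ (N + M + j)"
      using L1a[OF i2 c2(1)] c2(2) by auto
    have "card (cos (Q W (- int N)) (Q W (- int N - int j))) \<le> card (cos (Q V 0) (Q W (- int N - int j)))"
      using L1b[OF Q_subgroup[OF V(1)] Q_subgroup[OF W(1)] i1 Q_sub f3(1)] by simp
    then show ?thesis using c1 f3(2) by simp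
  qed
  then show ?thesis using pow_bound[OF nidx_pos[OF V]] by blast
qed

lemma part1:
  assumes dV: "depth_subgroup G T \<alpha> V"
    and eq: "V = V_plus G \<alpha> V <#> V_minus G \<alpha> V"
    and inf: "infinite (carrier G)"
  shows "1 < nidx V"
proof (rule ccontr)
  assume "\<not> 1 < nidx V"
  have V: "subgroup V G" "openin T V" using dV by (auto simp: depth_subgroup_def)
  have Vc: "V \<subseteq> carrier G" using subgroup.subset[OF V(1)] .
  have n1: "nidx V = 1" using nidx_pos[OF V] \<open>\<not> 1 < nidx V\<close> by simp
  have step: "Q V (m - 1) \<subseteq> Q V m" for m
    using card1[OF Q_subgroup[OF V(1)] Q_mono[of "m - 1" m] Q_sub] idx_step[OF V, of m] n1 by simp
  have up: "Q V 0 \<subseteq> Q V (int j)" for j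
  proof (induction j)
    case 0 then show ?case by simp
  next
    case (Suc j)
    have e: "int (Suc j) = int j + 1" by simp
    show ?case unfolding e by (rule order_trans[OF Suc]) (use step[of "int j + 1"] in simp)
  qed
  have Q0: "Q V 0 \<subseteq> {\<one>}"
  proof
    fix x assume x: "x \<in> Q V 0"
    then have xc: "x \<in> carrier G" by (simp add: Q_def)
    have "a k x \<in> V" for k
    proof (cases "k \<le> 0")
      case True then show ?thesis using x by (simp add: Q_def)
    next
      case False
      then have "x \<in> Q V (int (nat k))" using up x by blast
      then show ?thesis using False by (simp add: Q_def)
    qed
    then show "x \<in> {\<one>}" using depth_elem[OF dV xc] by simp
  qed
  have VM: "V \<subseteq> V_minus G \<alpha> V"
  proof
    fix z assume "z \<in> V"
    then have "z \<in> V_plus G \<alpha> V <#> V_minus G \<alpha> V" using eq by simp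
    then obtain p q where pq: "p \<in> V_plus G \<alpha> V" "q \<in> V_minus G \<alpha> V" "z = p \<otimes> q"
      by (auto simp: set_mult_def)
    have "p = \<one>" using pq(1) Q0 V_plus_Q[OF Vc] by auto
    moreover have "q \<in> carrier G" using pq(2) V_minus_eq[OF Vc] by auto
    ultimately show "z \<in> V_minus G \<alpha> V" using pq by simp
  qed
  have aV: "\<alpha> ` V \<subseteq> V"
  proof
    fix y assume "y \<in> \<alpha> ` V"
    then obtain z where z: "z \<in> V" "y = \<alpha> z" by blast
    then have "z \<in> {x \<in> carrier G. \<forall>k::nat. a (int k) x \<in> V}" using VM V_minus_eq[OF Vc] by auto
    then have "a (int 1) z \<in> V" by blast
    then show "y \<in> V" using z Vc a1[of z] by auto
  qed
  have fV: "finite (cos V (carrier G))" using FC[OF V] .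
  have sa: "subgroup (\<alpha> ` V) G"
  proof -
    have "group_hom G G \<alpha>" using hom_a by (simp add: group_hom.intro group_hom_axioms.intro is_group)
    then show ?thesis using group_hom.subgroup_img_is_subgroup[OF _ V(1)] by blast
  qed
  have ac: "\<alpha> ` V \<subseteq> carrier G" using subgroup.subset[OF sa] .
  have f2: "finite (cos (\<alpha> ` V) (carrier G))" "card (cos (\<alpha> ` V) (carrier G)) = card (cos V (carrier G))"
    using L3c[OF Vc order_refl] fV img by auto
  have f3: "finite (cos (\<alpha> ` V) V)" using L1a[OF Vc f2(1)] by simp
  have "card (cos (\<alpha> ` V) (carrier G)) = card (cos V (carrier G)) * card (cos (\<alpha> ` V) V)"
    using L2[OF sa V(1) subgroup_self aV Vc fV f3] by simp
  moreover have "0 < card (cos V (carrier G))"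
    using fV by (auto simp: card_gt_0_iff cos_def)
  ultimately have "card (cos (\<alpha> ` V) V) = 1" using f2(2) by simp
  then have VaV: "V \<subseteq> \<alpha> ` V" using card1[OF sa aV Vc] by simp
  have allk: "a k x \<in> V" if x: "x \<in> V" for x k
  proof (induction k rule: int_induct[where k=0])
    case base then show ?case using x by (simp add: a0)
  next
    case (step1 i)
    then show ?case using a_succ[of x i] x Vc aV by auto
  next
    case (step2 i)
    then obtain v where v: "v \<in> V" "a i x = \<alpha> v" using VaV by blast
    then show ?case using a_pred[of x i] x Vc be_al[OF subsetD[OF Vc v(1)]] v by auto
  qed
  have V1: "V \<subseteq> {\<one>}" using depth_elem[OF dV] allk Vc by blast
  have fin: "finite (\<Union>(cos V (carrier G)))"
  proof (rule finite_Union[OF fV])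
    fix C assume "C \<in> cos V (carrier G)"
    then obtain x where "C = V #> x" by (auto simp: cos_def)
    moreover have "finite V" using V1 finite_subset by blast
    ultimately show "finite C" by (simp add: r_coset_def)
  qed
  have "carrier G \<subseteq> \<Union>(cos V (carrier G))"
    using V(1) by (auto simp: cos_def intro: rcos_self)
  then show False using fin inf finite_subset by blast
qed

lemma plus_index_eq: "V \<subseteq> carrier G \<Longrightarrow> plus_index G \<alpha> V = nidx V"
  unfolding plus_index_def nidx_def cos_def using V_plus_Q[of V] Q_alpha[of V 0] by simp

end

theorem proposition5p5:
  fixes G :: "('a, 'b) monoid_scheme" and T :: "'a topology" and \<alpha> :: "'a \<Rightarrow> 'a"
  assumes "group G"
    and "topological_group G T"
    and "compact_space T"
    and "Hausdorff_space T"
    and "infinite (carrier G)"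
    and "\<alpha> \<in> iso G G"
    and "homeomorphic_map T T \<alpha>"
    and "finite_depth G T \<alpha>"
  shows "(\<forall>V. depth_subgroup G T \<alpha> V \<and> V = V_plus G \<alpha> V <#>\<^bsub>G\<^esub> V_minus G \<alpha> V
             \<longrightarrow> 1 < plus_index G \<alpha> V)
       \<and> (\<forall>V W. depth_subgroup G T \<alpha> V \<and> V = V_plus G \<alpha> V <#>\<^bsub>G\<^esub> V_minus G \<alpha> V
             \<and> depth_subgroup G T \<alpha> W \<and> W = V_plus G \<alpha> W <#>\<^bsub>G\<^esub> V_minus G \<alpha> W
             \<longrightarrow> plus_index G \<alpha> V = plus_index G \<alpha> W)"
proof -
  interpret X: topaut G \<alpha> T
    by (intro topaut.intro autgrp.intro autgrp_axioms.intro topaut_axioms.intro) (use assms in auto)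
  have pe: "plus_index G \<alpha> V = X.nidx V" if "depth_subgroup G T \<alpha> V" for V
    using that X.plus_index_eq by (simp add: depth_subgroup_def subgroup.subset)
  show ?thesis
  proof (intro conjI allI impI)
    fix V assume "depth_subgroup G T \<alpha> V \<and> V = V_plus G \<alpha> V <#>\<^bsub>G\<^esub> V_minus G \<alpha> V"
    then show "1 < plus_index G \<alpha> V" using X.part1 pe assms(5) by auto
  next
    fix V W assume h: "depth_subgroup G T \<alpha> V \<and> V = V_plus G \<alpha> V <#>\<^bsub>G\<^esub> V_minus G \<alpha> V
             \<and> depth_subgroup G T \<alpha> W \<and> W = V_plus G \<alpha> W <#>\<^bsub>G\<^esub> V_minus G \<alpha> W"
    then show "plus_index G \<alpha> V = plus_index G \<alpha> W"
      using X.part2 pe by (metis antisym)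
  qed
qed


end
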